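(* Let $\Sigma=\{x_1,\dots,x_d\}$ be a finite alphabet, $\mathbf w$ a right-infinite word over $\Sigma$, and $A_{\mathbf w}$ its factor algebra over $\mathbb Q$. Let $x=x_1+\cdots+x_d\in A_{\mathbf w}$, let $n\ge 1$, and let $V_n$ be the $\mathbb Q$-span of the factors of $\mathbf w$ of length $n$. Define the linear map $\Phi_n:V_n\to A_{\mathbf w}$ by $\Phi_n(u)=ux-xu$. Then the kernel of $\Phi_n$ is one-dimensional, spanned by $x^n=\sum_{u\in\mathrm{Fac}(\mathbf w),\,|u|=n}u$. Consequently, if $W_{n+1}$ denotes the $\mathbb Q$-span of all $ab-ba$ with $a,b\in\mathrm{Fac}(\mathbf w)$, $|a|+|b|=n+1$, then $\dim W_{n+1}\ge \dim V_n-1$.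
   Context: $\mathrm{Fac}(\mathbf w)$ is the set of finite factors (contiguous blocks, including the empty word) of $\mathbf w$. The factor algebra $A_{\mathbf w}$ over $\mathbb Q$ is the $\mathbb Q$-vector space with basis $\mathrm{Fac}(\mathbf w)$, with multiplication defined on basis elements by $u\cdot v=uv$ (concatenation) if $uv\in\mathrm{Fac}(\mathbf w)$ and $u\cdot v=0$ otherwise, extended bilinearly. In this algebra $x^n$ equals the sum of all factors of $\mathbf w$ of length $n$. *)

theory Defs
  imports Complex_Main "HOL-Library.Function_Algebras"
begin

text \<open>Right-infinite words are functions nat => 'a.
  Fac w: the finite factors (including the empty word).\<close>
definition Fac :: "(nat \<Rightarrow> 'a) \<Rightarrow> 'a list set" where
  "Fac w = {u. \<exists>i. u = map w [i..<i + length u]}"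

text \<open>Elements of the factor algebra A_w over Q are finitely supported functions
  'a list => rat whose support lies in Fac w (coefficient of each basis factor).\<close>
definition facalg :: "(nat \<Rightarrow> 'a) \<Rightarrow> ('a list \<Rightarrow> rat) set" where
  "facalg w = {f. finite {u. f u \<noteq> 0} \<and> {u. f u \<noteq> 0} \<subseteq> Fac w}"

definition bas :: "'a list \<Rightarrow> ('a list \<Rightarrow> rat)" where
  "bas u = (\<lambda>s. if s = u then 1 else 0)"

text \<open>Multiplication: bilinear extension of u.v = uv if uv is a factor, 0 otherwise.\<close>
definition facmult :: "(nat \<Rightarrow> 'a) \<Rightarrow> ('a list \<Rightarrow> rat) \<Rightarrow> ('a list \<Rightarrow> rat) \<Rightarrow> ('a list \<Rightarrow> rat)" where
  "facmult w f g = (\<lambda>s. if s \<in> Fac w then (\<Sum>i\<le>length s. f (take i s) * g (drop i s)) else 0)"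

definition qscale :: "rat \<Rightarrow> ('a list \<Rightarrow> rat) \<Rightarrow> ('a list \<Rightarrow> rat)" where
  "qscale c f = (\<lambda>s. c * f s)"

text \<open>x^n = sum of all factors of length n (x = x^1 = sum of the letters).\<close>
definition xpow :: "(nat \<Rightarrow> 'a) \<Rightarrow> nat \<Rightarrow> ('a list \<Rightarrow> rat)" where
  "xpow w n = (\<lambda>s. if s \<in> Fac w \<and> length s = n then 1 else 0)"

definition Vspace :: "(nat \<Rightarrow> 'a) \<Rightarrow> nat \<Rightarrow> ('a list \<Rightarrow> rat) set" where
  "Vspace w n = {f \<in> facalg w. \<forall>u. f u \<noteq> 0 \<longrightarrow> length u = n}"

definition Phi :: "(nat \<Rightarrow> 'a) \<Rightarrow> ('a list \<Rightarrow> rat) \<Rightarrow> ('a list \<Rightarrow> rat)" where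
  "Phi w f = facmult w f (xpow w 1) - facmult w (xpow w 1) f"

definition Wspace :: "(nat \<Rightarrow> 'a) \<Rightarrow> nat \<Rightarrow> ('a list \<Rightarrow> rat) set" where
  "Wspace w m = module.span qscale
     {facmult w (bas a) (bas b) - facmult w (bas b) (bas a) | a b.
        a \<in> Fac w \<and> b \<in> Fac w \<and> length a + length b = m}"

end

theory Submission
  imports Defs
begin

lemma Fac_iff: "u \<in> Fac w \<longleftrightarrow> (\<exists>i. u = map w [i..<i + length u])"
  by (simp add: Fac_def)

lemma Fac_intro: "map w [i..<i+k] \<in> Fac w"
  by (auto simp: Fac_def)

lemma Fac_take: assumes "u \<in> Fac w" shows "take k u \<in> Fac w"
proof -
  obtain i where u: "u = map w [i..<i + length u]" using assms by (auto simp: Fac_def)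
  show ?thesis
  proof (cases "k \<le> length u")
    case True
    have "take k u = map w [i..<i+k]" by (subst u) (simp add: take_map True)
    then show ?thesis using Fac_intro by metis
  next
    case False then show ?thesis using assms by simp
  qed
qed

lemma Fac_drop: assumes "u \<in> Fac w" shows "drop k u \<in> Fac w"
proof -
  obtain i where u: "u = map w [i..<i + length u]" using assms by (auto simp: Fac_def)
  show ?thesis
  proof (cases "k \<le> length u")
    case True
    have "drop k u = map w [i+k..<(i+k)+(length u - k)]" by (subst u) (simp add: drop_map True)
    then show ?thesis using Fac_intro by metis
  next
    case False then have "drop k u = map w [0..<0+0]" by simp
    then show ?thesis using Fac_intro by metis
  qed
qed

lemma Fac_set: assumes "u \<in> Fac w" "\<And>i. w i \<in> \<Sigma>" shows "set u \<subseteq> \<Sigma>"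
proof -
  obtain i where u: "u = map w [i..<i + length u]" using assms by (auto simp: Fac_def)
  show ?thesis by (subst u) (use assms(2) in auto)
qed

lemma Fac_finite: assumes "finite \<Sigma>" "\<And>i. w i \<in> \<Sigma>"
  shows "finite {u\<in>Fac w. length u = n}"
proof (rule finite_subset[OF _ finite_lists_length_eq[OF assms(1), of n]])
  show "{u \<in> Fac w. length u = n} \<subseteq> {xs. set xs \<subseteq> \<Sigma> \<and> length xs = n}"
    using Fac_set[of _ w \<Sigma>] assms(2) by blast
qed

lemma Fac_finite_le: assumes "finite \<Sigma>" "\<And>i. w i \<in> \<Sigma>"
  shows "finite {u\<in>Fac w. length u \<le> n}"
proof (rule finite_subset[OF _ finite_lists_length_le[OF assms(1), of n]])
  show "{u \<in> Fac w. length u \<le> n} \<subseteq> {xs. set xs \<subseteq> \<Sigma> \<and> length xs \<le> n}"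
    using Fac_set[of _ w \<Sigma>] assms(2) by blast
qed

lemma sum_fun_apply: "(sum g A) x = sum (\<lambda>a. g a x) A"
  by (induct A rule: infinite_finite_induct) auto

lemma facmult_x_right: assumes "s \<in> Fac w"
  shows "facmult w f (xpow w 1) s = (if s = [] then 0 else f (take (length s - 1) s))"
proof -
  have "facmult w f (xpow w 1) s = (\<Sum>i\<le>length s. if i = length s - 1 \<and> s \<noteq> [] then f (take i s) else 0)"
    unfolding facmult_def using assms Fac_drop[OF assms]
    by (simp, intro sum.cong) (auto simp: xpow_def Suc_le_eq)
  also have "\<dots> = (if s = [] then 0 else f (take (length s - 1) s))"
    by (cases "s = []") (auto simp: sum.delta)
  finally show ?thesis .
qed

lemma facmult_x_left: assumes "s \<in> Fac w"
  shows "facmult w (xpow w 1) f s = (if s = [] then 0 else f (drop 1 s))"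
proof -
  have "facmult w (xpow w 1) f s = (\<Sum>i\<le>length s. if i = 1 \<and> s \<noteq> [] then f (drop i s) else 0)"
    unfolding facmult_def using assms Fac_take[OF assms]
    by (simp, intro sum.cong) (auto simp: xpow_def min_def Suc_le_eq)
  also have "\<dots> = (if s = [] then 0 else f (drop 1 s))"
    by (cases s) (auto simp: sum.delta Suc_le_eq)
  finally show ?thesis .
qed

lemma Phi_apply: "Phi w f s = (if s \<in> Fac w \<and> s \<noteq> [] then f (take (length s - 1) s) - f (drop 1 s) else 0)"
  unfolding Phi_def fun_diff_def
  using facmult_x_right[of s w f] facmult_x_left[of s w f]
  by (auto simp: facmult_def)


lemma vs: "vector_space (qscale :: rat \<Rightarrow> ('a list \<Rightarrow> rat) \<Rightarrow> _)"
  by unfold_locales (auto simp: qscale_def fun_eq_iff algebra_simps)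

lemma Phi_linear: "Vector_Spaces.linear qscale qscale (Phi w)"
  unfolding Vector_Spaces.linear_iff using vs
  by (auto simp: fun_eq_iff Phi_apply qscale_def algebra_simps)

lemma kernel_sub:
  assumes n: "n \<ge> 1" and f: "f \<in> Vspace w n" and P: "Phi w f = 0"
  shows "f = qscale (f (map w [0..<n])) (xpow w n)"
proof -
  have step: "f (map w [k..<k+n]) = f (map w [Suc k..<Suc k+n])" for k
  proof -
    define s where "s = map w [k..<k+(n+1)]"
    have "s \<in> Fac w" unfolding s_def by (rule Fac_intro)
    moreover have "s \<noteq> []" unfolding s_def by simp
    ultimately have "f (take (length s - 1) s) = f (drop 1 s)"
      using fun_cong[OF P, of s] by (simp add: Phi_apply)
    moreover have "take (length s - 1) s = map w [k..<k+n]" unfolding s_def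
      by (simp add: take_map)
    moreover have "drop 1 s = map w [Suc k..<Suc k+n]" unfolding s_def
      by (simp add: drop_map)
    ultimately show ?thesis by simp
  qed
  have all: "f (map w [k..<k+n]) = f (map w [0..<n])" for k
    by (induct k) (use step in auto)
  show ?thesis
  proof (rule ext)
    fix u
    show "f u = qscale (f (map w [0..<n])) (xpow w n) u"
    proof (cases "u \<in> Fac w \<and> length u = n")
      case True
      then obtain i where "u = map w [i..<i+n]" by (auto simp: Fac_def)
      then show ?thesis using True all[of i] by (simp add: qscale_def xpow_def)
    next
      case False
      then have "f u = 0" using f by (auto simp: Vspace_def facalg_def)
      then show ?thesis using False unfolding qscale_def xpow_def by auto
    qed
  qed
qed

lemma xpow_in_V:
  assumes "finite \<Sigma>" "\<And>i. w i \<in> \<Sigma>"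
  shows "qscale c (xpow w n) \<in> Vspace w n"
proof -
  have "{u. qscale c (xpow w n) u \<noteq> 0} \<subseteq> {u\<in>Fac w. length u = n}"
    by (auto simp: qscale_def xpow_def)
  then show ?thesis using Fac_finite[OF assms, where n=n]
    by (auto simp: Vspace_def facalg_def qscale_def xpow_def intro: finite_subset)
qed

lemma Phi_xpow: "Phi w (qscale c (xpow w n)) = 0"
proof (rule ext)
  fix s
  show "Phi w (qscale c (xpow w n)) s = 0 s"
  proof (cases "s \<in> Fac w \<and> s \<noteq> []")
    case True
    then show ?thesis using Fac_take[of s w] Fac_drop[of s w]
      by (auto simp: Phi_apply qscale_def xpow_def)
  next
    case False then show ?thesis by (auto simp: Phi_apply)
  qed
qed

lemma kernel:
  assumes "finite \<Sigma>" "\<And>i. w i \<in> \<Sigma>" "n \<ge> 1"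
  shows "{f \<in> Vspace w n. Phi w f = 0} = {qscale c (xpow w n) | c. True}"
proof
  show "{f \<in> Vspace w n. Phi w f = 0} \<subseteq> {qscale c (xpow w n) | c. True}"
    using kernel_sub[OF assms(3)] by blast
  show "{qscale c (xpow w n) | c. True} \<subseteq> {f \<in> Vspace w n. Phi w f = 0}"
    using xpow_in_V[of \<Sigma> w, OF assms(1,2)] Phi_xpow by blast
qed

lemma xpow_nz: "xpow w n \<noteq> 0"
proof
  assume "xpow w n = 0"
  then have "xpow w n (map w [0..<0+n]) = 0" by simp
  then show False using Fac_intro[of w 0 n] by (simp add: xpow_def)
qed


lemma ms: "module (qscale :: rat \<Rightarrow> ('a list \<Rightarrow> rat) \<Rightarrow> _)"
  using vs by (simp add: module_iff_vector_space)

lemma facmult_add_right: "facmult w f (g + h) = facmult w f g + facmult w f h"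
  by (auto simp: fun_eq_iff facmult_def algebra_simps sum.distrib)

lemma facmult_add_left: "facmult w (g + h) f = facmult w g f + facmult w h f"
  by (auto simp: fun_eq_iff facmult_def algebra_simps sum.distrib)

lemma facmult_zero_right: "facmult w f 0 = 0"
  by (auto simp: fun_eq_iff facmult_def)

lemma facmult_zero_left: "facmult w 0 f = 0"
  by (auto simp: fun_eq_iff facmult_def)

lemma facmult_sum_right: "facmult w f (sum g A) = (\<Sum>a\<in>A. facmult w f (g a))"
  by (induct A rule: infinite_finite_induct) (simp_all only: simp_thms sum.infinite sum.empty sum.insert facmult_zero_right facmult_add_right)

lemma facmult_sum_left: "facmult w (sum g A) f = (\<Sum>a\<in>A. facmult w (g a) f)"
  by (induct A rule: infinite_finite_induct) (simp_all only: simp_thms sum.infinite sum.empty sum.insert facmult_zero_left facmult_add_left)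

lemma xpow_sum: assumes "finite {u\<in>Fac w. length u = k}"
  shows "xpow w k = (\<Sum>a\<in>{u\<in>Fac w. length u = k}. bas a)"
  by (auto simp: fun_eq_iff sum_fun_apply bas_def xpow_def sum.delta'[OF assms] sum.delta[OF assms])

lemma Phi_bas_W:
  assumes "finite \<Sigma>" "\<And>i. w i \<in> \<Sigma>" "u \<in> Fac w" "length u = n"
  shows "Phi w (bas u) \<in> Wspace w (n + 1)"
proof -
  let ?F1 = "{u\<in>Fac w. length u = 1}"
  have fin: "finite ?F1" using Fac_finite[OF assms(1,2)] .
  have "Phi w (bas u) = (\<Sum>a\<in>?F1. facmult w (bas u) (bas a) - facmult w (bas a) (bas u))"
    unfolding Phi_def xpow_sum[OF fin] facmult_sum_right facmult_sum_left sum_subtractf ..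
  also have "\<dots> \<in> Wspace w (n + 1)"
    unfolding Wspace_def
  proof (rule module.span_sum[OF ms])
    fix a assume a: "a \<in> ?F1"
    show "facmult w (bas u) (bas a) - facmult w (bas a) (bas u) \<in> module.span qscale
     {facmult w (bas a) (bas b) - facmult w (bas b) (bas a) | a b.
        a \<in> Fac w \<and> b \<in> Fac w \<and> length a + length b = n + 1}"
      by (rule module.span_base[OF ms], rule CollectI, rule exI[of _ u], rule exI[of _ a]) (use a assms in auto)
  qed
  finally show ?thesis .
qed


lemma bas_inj: "inj bas"
  by (rule injI) (auto simp: bas_def fun_eq_iff split: if_splits)

lemma bas_indep: "\<not> module.dependent qscale (bas ` (X :: 'a list set))"
  unfolding module.independent_explicit_module[OF ms]
proof (intro allI impI)
  fix t u v
  assume t: "finite t" "t \<subseteq> bas ` X" and s: "(\<Sum>v\<in>t. qscale (u v) v) = 0" and v: "v \<in> t"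
  then obtain a where a: "v = bas a" by blast
  have "0 = (\<Sum>v\<in>t. qscale (u v) v) a" using s by simp
  also have "\<dots> = (\<Sum>x\<in>t. if x = v then u x else 0)"
    unfolding sum_fun_apply
  proof (rule sum.cong[OF refl])
    fix x assume "x \<in> t"
    then obtain b where b: "x = bas b" using t by blast
    show "qscale (u x) x a = (if x = v then u x else 0)"
      using a b by (auto simp: qscale_def bas_def fun_eq_iff)
  qed
  also have "\<dots> = u v" using t v by (simp add: sum.delta')
  finally show "u v = 0" by simp
qed

lemma dimV:
  assumes "finite \<Sigma>" "\<And>i. w i \<in> \<Sigma>"
  shows "vector_space.dim qscale (Vspace w n) = card {u\<in>Fac w. length u = n}"
proof (rule vector_space.dim_unique[OF vs])
  let ?F = "{u\<in>Fac w. length u = n}"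
  have fin: "finite ?F" using Fac_finite[OF assms] .
  show "bas ` ?F \<subseteq> Vspace w n"
    by (auto simp: Vspace_def facalg_def bas_def split: if_splits)
  show "Vspace w n \<subseteq> module.span qscale (bas ` ?F)"
  proof
    fix f assume f: "f \<in> Vspace w n"
    have "f = (\<Sum>u\<in>?F. qscale (f u) (bas u))"
    proof (rule ext)
      fix s
      have "(\<Sum>u\<in>?F. qscale (f u) (bas u)) s = (\<Sum>u\<in>?F. if s = u then f s else 0)"
        unfolding sum_fun_apply by (rule sum.cong) (auto simp: qscale_def bas_def)
      also have "\<dots> = f s"
        using f fin by (auto simp: sum.delta Vspace_def facalg_def)
      finally show "f s = (\<Sum>u\<in>?F. qscale (f u) (bas u)) s" by simp
    qed
    also have "\<dots> \<in> module.span qscale (bas ` ?F)"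
      by (intro module.span_sum[OF ms] module.span_scale[OF ms] module.span_base[OF ms]) auto
    finally show "f \<in> module.span qscale (bas ` ?F)" .
  qed
  show "\<not> module.dependent qscale (bas ` ?F)" by (rule bas_indep)
  show "card (bas ` ?F) = card ?F"
    by (rule card_image) (rule inj_on_subset[OF bas_inj], simp)
qed


lemma mh: "module_hom qscale qscale (Phi w)"
  using Phi_linear module_hom_iff_linear by blast

lemma sub0: "module.subspace qscale {f \<in> Vspace w n. f u0 = 0}"
  unfolding module.subspace_def[OF ms]
proof (intro conjI ballI allI)
  show "0 \<in> {f \<in> Vspace w n. f u0 = 0}" by (simp add: Vspace_def facalg_def)
next
  fix x y assume x: "x \<in> {f \<in> Vspace w n. f u0 = 0}" and y: "y \<in> {f \<in> Vspace w n. f u0 = 0}"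
  have "{u. (x + y) u \<noteq> 0} \<subseteq> {u. x u \<noteq> 0} \<union> {u. y u \<noteq> 0}" by auto
  with x y show "x + y \<in> {f \<in> Vspace w n. f u0 = 0}"
    by (auto simp: Vspace_def facalg_def intro: finite_subset)
next
  fix c x assume x: "x \<in> {f \<in> Vspace w n. f u0 = 0}"
  have "{u. qscale c x u \<noteq> 0} \<subseteq> {u. x u \<noteq> 0}" by (auto simp: qscale_def)
  with x show "qscale c x \<in> {f \<in> Vspace w n. f u0 = 0}"
    by (auto simp: Vspace_def facalg_def qscale_def intro: finite_subset)
qed

lemma Gen_finite:
  assumes "finite \<Sigma>" "\<And>i. w i \<in> \<Sigma>"
  shows "finite {facmult w (bas a) (bas b) - facmult w (bas b) (bas a) | a b.
        a \<in> Fac w \<and> b \<in> Fac w \<and> length a + length b = m}"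
proof -
  let ?L = "{u\<in>Fac w. length u \<le> m}"
  have "{facmult w (bas a) (bas b) - facmult w (bas b) (bas a) | a b.
        a \<in> Fac w \<and> b \<in> Fac w \<and> length a + length b = m}
     \<subseteq> (\<lambda>(a,b). facmult w (bas a) (bas b) - facmult w (bas b) (bas a)) ` (?L \<times> ?L)"
    by fastforce
  moreover have "finite ((\<lambda>(a,b). facmult w (bas a) (bas b) - facmult w (bas b) (bas a)) ` (?L \<times> ?L))"
    using Fac_finite_le[of \<Sigma> w m, OF assms] by blast
  ultimately show ?thesis by (rule finite_subset)
qed

lemma dimW:
  assumes "finite \<Sigma>" "\<And>i. w i \<in> \<Sigma>" "n \<ge> 1"
  shows "int (vector_space.dim qscale (Wspace w (n + 1)))
             \<ge> int (vector_space.dim qscale (Vspace w n)) - 1"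
proof -
  let ?F = "{u\<in>Fac w. length u = n}"
  define u0 where "u0 = map w [0..<0+n]"
  have u0F: "u0 \<in> ?F" unfolding u0_def using Fac_intro[of w 0 n] by simp
  have fin: "finite ?F" using Fac_finite[OF assms(1,2)] .
  define B0 where "B0 = bas ` (?F - {u0})"
  have S0: "module.span qscale B0 \<subseteq> {f \<in> Vspace w n. f u0 = 0}"
    by (rule module.span_minimal[OF ms _ sub0]) (auto simp: B0_def Vspace_def facalg_def bas_def split: if_splits)
  have inj: "inj_on (Phi w) (module.span qscale B0)"
    unfolding module_hom.inj_on_iff_eq_0[OF mh module.subspace_span[OF ms]]
  proof (intro ballI impI)
    fix x assume x: "x \<in> module.span qscale B0" and P: "Phi w x = 0"
    then have xV: "x \<in> Vspace w n" and x0: "x u0 = 0" using S0 by auto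
    have "x = qscale (x (map w [0..<n])) (xpow w n)" by (rule kernel_sub[OF assms(3) xV P])
    also have "\<dots> = 0" using x0 by (simp add: u0_def qscale_def fun_eq_iff)
    finally show "x = 0" .
  qed
  define G where "G = Phi w ` B0"
  have indG: "\<not> module.dependent qscale G"
    unfolding G_def B0_def
    by (rule module_hom.independent_injective_image[OF mh bas_indep]) (use inj in \<open>simp add: B0_def\<close>)
  have "card G = card B0"
    unfolding G_def
    by (rule card_image, rule inj_on_subset[OF inj], rule module.span_superset[OF ms])
  also have "\<dots> = card (?F - {u0})"
    unfolding B0_def by (rule card_image) (rule inj_on_subset[OF bas_inj], simp)
  also have "\<dots> = card ?F - 1" using u0F fin by simp
  finally have cG: "card G = card ?F - 1" .
  have GW: "G \<subseteq> Wspace w (n + 1)"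
    unfolding G_def B0_def using Phi_bas_W[OF assms(1,2)] by auto
  let ?Gen = "{facmult w (bas a) (bas b) - facmult w (bas b) (bas a) | a b.
        a \<in> Fac w \<and> b \<in> Fac w \<and> length a + length b = n + 1}"
  have fGen: "finite ?Gen" by (rule Gen_finite[OF assms(1,2)])
  obtain B' where B': "B' \<subseteq> Wspace w (n + 1)" "\<not> module.dependent qscale B'"
     "Wspace w (n + 1) \<subseteq> module.span qscale B'" "card B' = vector_space.dim qscale (Wspace w (n + 1))"
    by (rule vector_space.basis_exists[OF vs])
  have "finite B'"
    using vector_space.independent_span_bound[OF vs fGen B'(2)] B'(1) unfolding Wspace_def by blast
  then have "card G \<le> card B'"
    using vector_space.independent_span_bound[OF vs _ indG] GW B'(3) by blast
  then show ?thesis using cG B'(4) dimV[of \<Sigma> w n, OF assms(1,2)] by linarith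
qed

theorem mainTheorem7:
  fixes w :: "nat \<Rightarrow> 'a" and \<Sigma> :: "'a set" and n :: nat
  assumes "finite \<Sigma>" and "\<And>i. w i \<in> \<Sigma>" and "n \<ge> 1"
  shows "{f \<in> Vspace w n. Phi w f = 0} = {qscale c (xpow w n) | c. True}
         \<and> xpow w n \<noteq> 0
         \<and> int (vector_space.dim qscale (Wspace w (n + 1)))
             \<ge> int (vector_space.dim qscale (Vspace w n)) - 1"
  using kernel[of \<Sigma> w n, OF assms] xpow_nz[of w n] dimW[of \<Sigma> w n, OF assms] by blast

end
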